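(* Let $\mathcal{I}=(R,U,C,\omega)$ be an instance of Valued APEP$\langle \mathsf{BoD}_\forall,\mathsf{BoD}_\exists,\mathsf{SoD}_\exists,\mathsf{SoD}_\forall,\mathsf{Card}_{UB},\mathsf{Card}_{LB}\rangle$ with $k=|R|$, and let $\tau=\max_{(r,\ge,t)\in C}t$. Then $C$ is $3\tau k\binom{k}{2}$-wbounded. Moreover, for any complete authorization relation $A$ there exists a complete authorization relation $A^*\subseteq A$ such that $A^*$ has at most $3\tau\binom{k}{2}$ users (i.e. $|\{u:A^*(u)\neq\emptyset\}|\le 3\tau\binom{k}{2}$) and $w_C(A^* )\le w_C(A)$.
   Context: $U$ is a finite set of users, $R$ a finite set of resources; authorization relation $A\subseteq U\times R$, $A(r)=\{u:(u,r)\in A\}$, $A(u)=\{r:(u,r)\in A\}$; $A$ is complete if $A(r)\ne\emptyset$ for all $r$. A weighted constraint is $w_c:2^{U\times R}\to\mathbb{N}$; $w_C(A)=\sum_{c\in C}w_c(A)$. A Valued APEP instance $(R,U,C,\omega)$ has $\omega:U\times 2^R\to\mathbb{N}$ monotone in the second argument. For each constraint $c$, $f_c:\mathbb{Z}\to\mathbb{N}$ is nondecreasing with $f_c(z)=0$ iff $z\le 0$, and $\ell_c>0$ is a constant; $\mathrm{maxdiff}(A,r,r')=\max\{|A(r)\setminus A(r')|,|A(r')\setminus A(r)|\}$. The constraint types are: $\mathsf{Card}_{UB}$ $(r,\le,t)$ with $w_c(A)=f_c(|A(r)|-t)$; $\mathsf{Card}_{LB}$ $(r,\ge,t)$ with $w_c(A)=f_c(t-|A(r)|)$;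 $\mathsf{SoD}_\forall$ $(r,r',\updownarrow,\forall)$ with $w_c(A)=f_c(|A(r)\cap A(r')|)$; $\mathsf{BoD}_\forall$ $(r,r',\leftrightarrow,\forall)$ with $w_c(A)=f_c(\mathrm{maxdiff}(A,r,r'))$; $\mathsf{SoD}_\exists$ $(r,r',\updownarrow,\exists)$ with $w_c(A)=0$ if $A(r)\neq A(r')$ and $\ell_c$ otherwise; $\mathsf{BoD}_\exists$ $(r,r',\leftrightarrow,\exists)$ with $w_c(A)=0$ if $A(r)\cap A(r')\ne\emptyset$ and $\ell_c$ otherwise. Valued APEP$\langle X\rangle$ denotes instances all of whose constraints have types in $X$. $C$ is $t$-wbounded if for every complete $A$ with $|A|>t$ there is a complete $A'\subseteq A$ with $|A'|<|A|$ and $w_C(A')\le w_C(A)$. *)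

theory Defs
  imports Main
begin

datatype 'r constr =
    CardUB 'r nat "int \<Rightarrow> nat"
  | CardLB 'r nat "int \<Rightarrow> nat"
  | SoDAll 'r 'r "int \<Rightarrow> nat"
  | BoDAll 'r 'r "int \<Rightarrow> nat"
  | SoDEx 'r 'r nat
  | BoDEx 'r 'r nat

definition usersOf :: "('u \<times> 'r) set \<Rightarrow> 'r \<Rightarrow> 'u set" where
  "usersOf A r = {u. (u, r) \<in> A}"

definition resOf :: "('u \<times> 'r) set \<Rightarrow> 'u \<Rightarrow> 'r set" where
  "resOf A u = {r. (u, r) \<in> A}"

definition complete :: "'r set \<Rightarrow> ('u \<times> 'r) set \<Rightarrow> bool" where
  "complete R A \<longleftrightarrow> (\<forall>r\<in>R. usersOf A r \<noteq> {})"

definition maxdiff :: "('u \<times> 'r) set \<Rightarrow> 'r \<Rightarrow> 'r \<Rightarrow> nat" where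
  "maxdiff A r r' = max (card (usersOf A r - usersOf A r')) (card (usersOf A r' - usersOf A r))"

fun weight :: "'r constr \<Rightarrow> ('u \<times> 'r) set \<Rightarrow> nat" where
  "weight (CardUB r t f) A = f (int (card (usersOf A r)) - int t)"
| "weight (CardLB r t f) A = f (int t - int (card (usersOf A r)))"
| "weight (SoDAll r r' f) A = f (int (card (usersOf A r \<inter> usersOf A r')))"
| "weight (BoDAll r r' f) A = f (int (maxdiff A r r'))"
| "weight (SoDEx r r' l) A = (if usersOf A r \<noteq> usersOf A r' then 0 else l)"
| "weight (BoDEx r r' l) A = (if usersOf A r \<inter> usersOf A r' \<noteq> {} then 0 else l)"

definition wC :: "'r constr set \<Rightarrow> ('u \<times> 'r) set \<Rightarrow> nat" where
  "wC C A = (\<Sum>c\<in>C. weight c A)"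

definition penalty_fun :: "(int \<Rightarrow> nat) \<Rightarrow> bool" where
  "penalty_fun f \<longleftrightarrow> mono f \<and> (\<forall>z. f z = 0 \<longleftrightarrow> z \<le> 0)"

fun valid_constr :: "'r set \<Rightarrow> 'r constr \<Rightarrow> bool" where
  "valid_constr R (CardUB r t f) = (r \<in> R \<and> penalty_fun f)"
| "valid_constr R (CardLB r t f) = (r \<in> R \<and> penalty_fun f)"
| "valid_constr R (SoDAll r r' f) = (r \<in> R \<and> r' \<in> R \<and> penalty_fun f)"
| "valid_constr R (BoDAll r r' f) = (r \<in> R \<and> r' \<in> R \<and> penalty_fun f)"
| "valid_constr R (SoDEx r r' l) = (r \<in> R \<and> r' \<in> R \<and> l > 0)"
| "valid_constr R (BoDEx r r' l) = (r \<in> R \<and> r' \<in> R \<and> l > 0)"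

definition valued_apep :: "'r set \<Rightarrow> 'u set \<Rightarrow> 'r constr set \<Rightarrow> ('u \<Rightarrow> 'r set \<Rightarrow> nat) \<Rightarrow> bool" where
  "valued_apep R U C \<omega> \<longleftrightarrow> finite R \<and> finite U \<and> finite C \<and> (\<forall>c\<in>C. valid_constr R c)
     \<and> (\<forall>u S T. S \<subseteq> T \<longrightarrow> \<omega> u S \<le> \<omega> u T)"

definition wbounded :: "'r set \<Rightarrow> 'u set \<Rightarrow> 'r constr set \<Rightarrow> nat \<Rightarrow> bool" where
  "wbounded R U C t \<longleftrightarrow>
     (\<forall>A. A \<subseteq> U \<times> R \<longrightarrow> complete R A \<longrightarrow> card A > t \<longrightarrow>
        (\<exists>A'. A' \<subseteq> A \<and> complete R A' \<and> card A' < card A \<and> wC C A' \<le> wC C A))"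

text \<open>tau = max t over lower-bound cardinality constraints (r, >=, t) in C,
  with the convention that tau is at least 1.\<close>
definition tau :: "'r constr set \<Rightarrow> nat" where
  "tau C = Max ({1} \<union> {t. \<exists>r f. CardLB r t f \<in> C})"

end

theory Submission
  imports Defs
begin

definition restr :: "('u \<times> 'r) set \<Rightarrow> 'u set \<Rightarrow> ('u \<times> 'r) set" where
  "restr A S = {p \<in> A. fst p \<in> S}"

lemma usersOf_restr: "usersOf (restr A S) r = usersOf A r \<inter> S"
  by (auto simp: usersOf_def restr_def)

lemma w_UB: assumes "mono f" "finite (usersOf A r)"
  shows "weight (CardUB r t f) (restr A S) \<le> weight (CardUB r t f) A"
proof -
  have "card (usersOf A r \<inter> S) \<le> card (usersOf A r)" using assms(2) by (intro card_mono) auto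
  hence "int (card (usersOf A r \<inter> S)) - int t \<le> int (card (usersOf A r)) - int t" by linarith
  hence "f (int (card (usersOf A r \<inter> S)) - int t) \<le> f (int (card (usersOf A r)) - int t)"
    by (rule monoD[OF assms(1)])
  thus ?thesis by (simp only: weight.simps usersOf_restr)
qed

lemma w_LB: assumes "penalty_fun f" "t \<le> tau C"
   "card (usersOf A r \<inter> S) \<ge> min (card (usersOf A r)) (tau C)"
  shows "weight (CardLB r t f) (restr A S) \<le> weight (CardLB r t f) A"
proof (cases "card (usersOf A r \<inter> S) \<ge> t")
  case True
  hence "f (int t - int (card (usersOf A r \<inter> S))) = 0" using assms(1) by (simp add: penalty_fun_def)
  thus ?thesis by (simp only: weight.simps usersOf_restr)
next
  case False
  hence "card (usersOf A r) \<le> card (usersOf A r \<inter> S)" using assms(2,3) by linarith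
  hence "int t - int (card (usersOf A r \<inter> S)) \<le> int t - int (card (usersOf A r))" by linarith
  hence "f (int t - int (card (usersOf A r \<inter> S))) \<le> f (int t - int (card (usersOf A r)))"
    using assms(1) unfolding penalty_fun_def by (blast intro: monoD)
  thus ?thesis by (simp only: weight.simps usersOf_restr)
qed

lemma w_SA: assumes "mono f" "finite (usersOf A r)"
  shows "weight (SoDAll r r' f) (restr A S) \<le> weight (SoDAll r r' f) A"
proof -
  have "card (usersOf A r \<inter> S \<inter> (usersOf A r' \<inter> S)) \<le> card (usersOf A r \<inter> usersOf A r')"
    using assms(2) by (intro card_mono) auto
  hence "f (int (card (usersOf A r \<inter> S \<inter> (usersOf A r' \<inter> S)))) \<le> f (int (card (usersOf A r \<inter> usersOf A r')))"
    by (intro monoD[OF assms(1)]) simp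
  thus ?thesis by (simp only: weight.simps usersOf_restr)
qed

lemma w_BA: assumes "mono f" "finite (usersOf A r)" "finite (usersOf A r')"
  shows "weight (BoDAll r r' f) (restr A S) \<le> weight (BoDAll r r' f) A"
proof -
  have "card (usersOf A r \<inter> S - usersOf A r' \<inter> S) \<le> card (usersOf A r - usersOf A r')"
    using assms(2) by (intro card_mono) auto
  moreover have "card (usersOf A r' \<inter> S - usersOf A r \<inter> S) \<le> card (usersOf A r' - usersOf A r)"
    using assms(3) by (intro card_mono) auto
  ultimately have "maxdiff (restr A S) r r' \<le> maxdiff A r r'"
    unfolding maxdiff_def usersOf_restr by (rule max.mono)
  hence "f (int (maxdiff (restr A S) r r')) \<le> f (int (maxdiff A r r'))"
    by (intro monoD[OF assms(1)]) simp
  thus ?thesis by (simp only: weight.simps)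
qed

lemma w_SE: assumes "usersOf A r \<inter> S = usersOf A r' \<inter> S \<Longrightarrow> usersOf A r = usersOf A r'"
  shows "weight (SoDEx r r' l) (restr A S) \<le> weight (SoDEx r r' l) A"
  unfolding weight.simps usersOf_restr using assms by (cases "usersOf A r \<inter> S = usersOf A r' \<inter> S") auto

lemma w_BE: assumes "usersOf A r \<inter> usersOf A r' \<noteq> {} \<Longrightarrow> usersOf A r \<inter> S \<inter> (usersOf A r' \<inter> S) \<noteq> {}"
  shows "weight (BoDEx r r' l) (restr A S) \<le> weight (BoDEx r r' l) A"
  unfolding weight.simps usersOf_restr using assms by (cases "usersOf A r \<inter> S \<inter> (usersOf A r' \<inter> S) = {}") auto
lemma tau_ge1: "tau C \<ge> 1" if "finite C"
proof -
  have "{t. \<exists>r f. CardLB r t f \<in> C} \<subseteq> (\<lambda>c. case c of CardLB r t f \<Rightarrow> t | _ \<Rightarrow> 0) ` C"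
  proof
    fix t assume "t \<in> {t. \<exists>r f. CardLB r t f \<in> C}"
    then obtain r f where "CardLB r t f \<in> C" by auto
    thus "t \<in> (\<lambda>c. case c of CardLB r t f \<Rightarrow> t | _ \<Rightarrow> 0) ` C"
      by (rule rev_image_eqI) simp
  qed
  hence "finite {t. \<exists>r f. CardLB r t f \<in> C}" using that finite_surj by blast
  thus ?thesis unfolding tau_def by (intro Max_ge) auto
qed

lemma tau_ge: "t \<le> tau C" if "finite C" "CardLB r t f \<in> C"
proof -
  have "{t. \<exists>r f. CardLB r t f \<in> C} \<subseteq> (\<lambda>c. case c of CardLB r t f \<Rightarrow> t | _ \<Rightarrow> 0) ` C"
  proof
    fix t assume "t \<in> {t. \<exists>r f. CardLB r t f \<in> C}"
    then obtain r f where "CardLB r t f \<in> C" by auto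
    thus "t \<in> (\<lambda>c. case c of CardLB r t f \<Rightarrow> t | _ \<Rightarrow> 0) ` C"
      by (rule rev_image_eqI) simp
  qed
  hence "finite {t. \<exists>r f. CardLB r t f \<in> C}" using that finite_surj by blast
  thus ?thesis unfolding tau_def using that by (intro Max_ge) auto
qed

lemma key:
  assumes inst: "valued_apep R U C \<omega>"
    and AU: "A \<subseteq> U \<times> R" and comp: "complete R A"
    and a: "\<And>r. r \<in> R \<Longrightarrow> card (usersOf A r \<inter> S) \<ge> min (card (usersOf A r)) (tau C)"
    and b: "\<And>r r'. r \<in> R \<Longrightarrow> r' \<in> R \<Longrightarrow> usersOf A r \<inter> usersOf A r' \<noteq> {}
              \<Longrightarrow> usersOf A r \<inter> usersOf A r' \<inter> S \<noteq> {}"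
    and c: "\<And>r r'. r \<in> R \<Longrightarrow> r' \<in> R \<Longrightarrow> usersOf A r \<noteq> usersOf A r'
              \<Longrightarrow> usersOf A r \<inter> S \<noteq> usersOf A r' \<inter> S"
  shows "restr A S \<subseteq> A \<and> complete R (restr A S) \<and> wC C (restr A S) \<le> wC C A"
proof -
  have finC: "finite C" and finU: "finite U" and val: "\<And>c. c \<in> C \<Longrightarrow> valid_constr R c"
    using inst by (auto simp: valued_apep_def)
  have finA: "finite (usersOf A r)" for r
    proof -
    have "usersOf A r \<subseteq> U" using AU by (auto simp: usersOf_def)
    thus ?thesis using finU by (rule finite_subset)
  qed
  have t1: "tau C \<ge> 1" using tau_ge1[OF finC] .
  have compl: "complete R (restr A S)"
    unfolding complete_def usersOf_restr
  proof
    fix r assume r: "r \<in> R"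
    have "usersOf A r \<noteq> {}" using comp r by (auto simp: complete_def)
    hence "card (usersOf A r) \<ge> 1" using finA by (simp add: Suc_le_eq card_gt_0_iff)
    hence "card (usersOf A r \<inter> S) \<ge> 1" using a[OF r] t1 by linarith
    thus "usersOf A r \<inter> S \<noteq> {}" by auto
  qed
  have w: "weight c (restr A S) \<le> weight c A" if cC: "c \<in> C" for c
  proof (cases c)
    case (CardUB r t f)
    from val[OF cC] have v: "r \<in> R \<and> penalty_fun f" unfolding CardUB by simp
    show ?thesis unfolding CardUB by (rule w_UB) (use v finA in \<open>auto simp: penalty_fun_def\<close>)
  next
    case (CardLB r t f)
    from val[OF cC] have v: "r \<in> R \<and> penalty_fun f" unfolding CardLB by simp
    have tt: "t \<le> tau C" using tau_ge[OF finC] cC unfolding CardLB by blast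
    show ?thesis unfolding CardLB by (rule w_LB) (use v tt a in auto)
  next
    case (SoDAll r r' f)
    from val[OF cC] have v: "penalty_fun f" unfolding SoDAll by simp
    show ?thesis unfolding SoDAll by (rule w_SA) (use v finA in \<open>auto simp: penalty_fun_def\<close>)
  next
    case (BoDAll r r' f)
    from val[OF cC] have v: "penalty_fun f" unfolding BoDAll by simp
    show ?thesis unfolding BoDAll by (rule w_BA) (use v finA in \<open>auto simp: penalty_fun_def\<close>)
  next
    case (SoDEx r r' l)
    from val[OF cC] have v: "r \<in> R" "r' \<in> R" unfolding SoDEx by simp_all
    show ?thesis unfolding SoDEx by (rule w_SE) (metis c v)
  next
    case (BoDEx r r' l)
    from val[OF cC] have v: "r \<in> R" "r' \<in> R" unfolding BoDEx by simp_all
    have eq: "usersOf A r \<inter> S \<inter> (usersOf A r' \<inter> S) = usersOf A r \<inter> usersOf A r' \<inter> S" by blast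
    show ?thesis unfolding BoDEx by (rule w_BE) (simp only: eq, rule b[OF v])
  qed
  have "wC C (restr A S) \<le> wC C A" unfolding wC_def by (intro sum_mono w)
  moreover have "restr A S \<subseteq> A" by (auto simp: restr_def)
  ultimately show ?thesis using compl by blast
qed

lemma arith_bound:
  fixes k t :: nat
  assumes "k \<ge> 2" "t \<ge> 1" "\<not> (k = 2 \<and> t = 1)"
  shows "k * t + 2 * (k choose 2) \<le> 3 * t * (k choose 2)"
proof (cases "k = 2")
  case True
  hence "t \<ge> 2" using assms by auto
  thus ?thesis using True by (simp add: choose_two)
next
  case False
  hence k3: "k \<ge> 3" using assms by auto
  have "k * 2 \<le> k * (k - 1)" using k3 by (intro mult_le_mono2) linarith
  hence kc: "k \<le> k choose 2" unfolding choose_two by linarith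
  have "k * t \<le> t * (k choose 2)" using kc by simp
  moreover have "2 * (k choose 2) \<le> 2 * t * (k choose 2)" using assms(2) by simp
  ultimately show ?thesis by linarith
qed

lemma two_res:
  assumes "R = {r1, r2}"
    and "usersOf A r1 \<inter> usersOf A r2 \<noteq> {} \<Longrightarrow> usersOf A r1 \<inter> usersOf A r2 \<inter> S \<noteq> {}"
    and "usersOf A r1 \<noteq> usersOf A r2 \<Longrightarrow> usersOf A r1 \<inter> S \<noteq> usersOf A r2 \<inter> S"
    and "usersOf A r1 \<inter> S \<noteq> {}" "usersOf A r2 \<inter> S \<noteq> {}"
  shows "(\<forall>r r'. r \<in> R \<longrightarrow> r' \<in> R \<longrightarrow> usersOf A r \<inter> usersOf A r' \<noteq> {}
              \<longrightarrow> usersOf A r \<inter> usersOf A r' \<inter> S \<noteq> {})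
      \<and> (\<forall>r r'. r \<in> R \<longrightarrow> r' \<in> R \<longrightarrow> usersOf A r \<noteq> usersOf A r'
              \<longrightarrow> usersOf A r \<inter> S \<noteq> usersOf A r' \<inter> S)"
proof -
  have e1: "usersOf A r2 \<inter> usersOf A r1 \<inter> S = usersOf A r1 \<inter> usersOf A r2 \<inter> S" by blast
  have e2: "usersOf A r2 \<inter> usersOf A r1 = usersOf A r1 \<inter> usersOf A r2" by blast
  have e3: "X \<inter> X \<inter> S = X \<inter> S" for X by blast
  show ?thesis using assms(2-5) unfolding assms(1) e3 by (auto simp only: e1 e2 insert_iff empty_iff)
qed

lemma construct:
  assumes inst: "valued_apep R U C \<omega>"
    and AU: "A \<subseteq> U \<times> R" and comp: "complete R A"
    and k2: "card R \<ge> 2"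
  shows "\<exists>S. finite S \<and> card S \<le> 3 * tau C * (card R choose 2)
    \<and> (\<forall>r. r \<in> R \<longrightarrow> card (usersOf A r \<inter> S) \<ge> min (card (usersOf A r)) (tau C))
    \<and> (\<forall>r r'. r \<in> R \<longrightarrow> r' \<in> R \<longrightarrow> usersOf A r \<inter> usersOf A r' \<noteq> {}
              \<longrightarrow> usersOf A r \<inter> usersOf A r' \<inter> S \<noteq> {})
    \<and> (\<forall>r r'. r \<in> R \<longrightarrow> r' \<in> R \<longrightarrow> usersOf A r \<noteq> usersOf A r'
              \<longrightarrow> usersOf A r \<inter> S \<noteq> usersOf A r' \<inter> S)"
    (is "\<exists>S. _ \<and> _ \<and> _ \<and> ?B S \<and> ?C S")
proof -
  have finC: "finite C" and finU: "finite U" and finR: "finite R"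
    using inst by (auto simp: valued_apep_def)
  have finA: "finite (usersOf A r)" for r
  proof -
    have "usersOf A r \<subseteq> U" using AU by (auto simp: usersOf_def)
    thus ?thesis using finU by (rule finite_subset)
  qed
  have ne: "usersOf A r \<noteq> {}" if "r \<in> R" for r using comp that by (auto simp: complete_def)
  have t1: "tau C \<ge> 1" using tau_ge1[OF finC] .
  show ?thesis
  proof (cases "card R = 2 \<and> tau C = 1")
    case True
    then obtain r1 r2 where R: "R = {r1, r2}" and r12: "r1 \<noteq> r2" by (meson card_2_iff)
    have aa: "card (usersOf A r \<inter> S) \<ge> min (card (usersOf A r)) (tau C)"
      if "usersOf A r \<inter> S \<noteq> {}" "finite S" for r S
    proof -
      have "card (usersOf A r \<inter> S) \<ge> 1" using that by (simp add: Suc_le_eq card_gt_0_iff)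
      thus ?thesis using True by linarith
    qed
    have c3: "3 * tau C * (card R choose 2) = 3" using True by (simp add: choose_two)
    show ?thesis
    proof (cases "usersOf A r1 \<inter> usersOf A r2 = {}")
      case False
      then obtain u where u: "u \<in> usersOf A r1" "u \<in> usersOf A r2" by blast
      obtain v where v: "usersOf A r1 \<noteq> usersOf A r2 \<Longrightarrow>
          (v \<in> usersOf A r1 \<and> v \<notin> usersOf A r2) \<or> (v \<in> usersOf A r2 \<and> v \<notin> usersOf A r1)"
        by blast
      define S where "S = {u, v}"
      have 1: "usersOf A r1 \<inter> S \<noteq> {}" "usersOf A r2 \<inter> S \<noteq> {}"
          "usersOf A r1 \<inter> usersOf A r2 \<inter> S \<noteq> {}" using u unfolding S_def by blast+
      have 2: "usersOf A r1 \<inter> S \<noteq> usersOf A r2 \<inter> S" if "usersOf A r1 \<noteq> usersOf A r2"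
        using v[OF that] unfolding S_def by blast
      have "card S \<le> 2" unfolding S_def by (simp add: card_insert_le_m1)
      moreover have "finite S" unfolding S_def by simp
      moreover have tr: "?B S \<and> ?C S" using two_res[OF R _ 2 1(1,2)] 1(3) by blast
      moreover have "\<forall>r. r \<in> R \<longrightarrow> card (usersOf A r \<inter> S) \<ge> min (card (usersOf A r)) (tau C)"
        using aa[OF _ \<open>finite S\<close>] 1(1,2) R by blast
      ultimately show ?thesis using c3 by (intro exI[of _ S]) simp
    next
      case True
      obtain u1 where u1: "u1 \<in> usersOf A r1" using ne R by blast
      obtain u2 where u2: "u2 \<in> usersOf A r2" using ne R by blast
      define S where "S = {u1, u2}"
      have 1: "usersOf A r1 \<inter> S \<noteq> {}" "usersOf A r2 \<inter> S \<noteq> {}"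
        using u1 u2 unfolding S_def by blast+
      have 2: "usersOf A r1 \<inter> S \<noteq> usersOf A r2 \<inter> S"
        using u1 True unfolding S_def by blast
      have "card S \<le> 2" unfolding S_def by (simp add: card_insert_le_m1)
      moreover have "finite S" unfolding S_def by simp
      moreover have tr: "?B S \<and> ?C S" using two_res[OF R _ _ 1] True 2 by blast
      moreover have "\<forall>r. r \<in> R \<longrightarrow> card (usersOf A r \<inter> S) \<ge> min (card (usersOf A r)) (tau C)"
        using aa[OF _ \<open>finite S\<close>] 1(1,2) R by blast
      ultimately show ?thesis using c3 by (intro exI[of _ S]) simp
    qed
  next
    case False
    define T where "T r = (SOME T. T \<subseteq> usersOf A r \<and> card T = min (card (usersOf A r)) (tau C))" for r
    have T: "T r \<subseteq> usersOf A r \<and> card (T r) = min (card (usersOf A r)) (tau C)" for r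
    proof -
      have "\<exists>T. T \<subseteq> usersOf A r \<and> card T = min (card (usersOf A r)) (tau C)"
        by (meson min.cobounded1 obtain_subset_with_card_n)
      thus ?thesis unfolding T_def by (rule someI_ex)
    qed
    have finT: "finite (T r)" for r using T finA finite_subset by metis
    define P2 where "P2 = {B. B \<subseteq> R \<and> card B = 2}"
    define I where "I B = (if \<exists>u. \<forall>r\<in>B. u \<in> usersOf A r then {SOME u. \<forall>r\<in>B. u \<in> usersOf A r} else {})" for B
    define D where "D B = (if \<exists>u. \<exists>x\<in>B. \<exists>y\<in>B. u \<in> usersOf A x \<and> u \<notin> usersOf A y
       then {SOME u. \<exists>x\<in>B. \<exists>y\<in>B. u \<in> usersOf A x \<and> u \<notin> usersOf A y} else {})" for B
    define S where "S = (\<Union>r\<in>R. T r) \<union> (\<Union>B\<in>P2. I B \<union> D B)"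
    have finP2: "finite P2" unfolding P2_def using finR by simp
    have cP2: "card P2 = card R choose 2" unfolding P2_def using n_subsets[OF finR] .
    have finID: "finite (I B \<union> D B)" for B unfolding I_def D_def by simp
    have cID: "card (I B \<union> D B) \<le> 2" for B
    proof -
      have "card (I B) \<le> 1" "card (D B) \<le> 1" unfolding I_def D_def by simp_all
      thus ?thesis using card_Un_le[of "I B" "D B"] by linarith
    qed
    have finS: "finite S" unfolding S_def using finR finP2 finT finID by blast
    have "card (\<Union>r\<in>R. T r) \<le> (\<Sum>r\<in>R. card (T r))" by (rule card_UN_le[OF finR])
    also have "\<dots> \<le> card R * tau C" using sum_bounded_above[of R "\<lambda>r. card (T r)" "tau C"] T by simp
    finally have s1: "card (\<Union>r\<in>R. T r) \<le> card R * tau C" .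
    have "card (\<Union>B\<in>P2. I B \<union> D B) \<le> (\<Sum>B\<in>P2. card (I B \<union> D B))" by (rule card_UN_le[OF finP2])
    also have "\<dots> \<le> card P2 * 2" using sum_bounded_above[of P2 "\<lambda>B. card (I B \<union> D B)" 2] cID by simp
    finally have s2: "card (\<Union>B\<in>P2. I B \<union> D B) \<le> 2 * (card R choose 2)" using cP2 by simp
    have "card S \<le> card (\<Union>r\<in>R. T r) + card (\<Union>B\<in>P2. I B \<union> D B)"
      unfolding S_def by (rule card_Un_le)
    also have "\<dots> \<le> card R * tau C + 2 * (card R choose 2)" using s1 s2 by linarith
    also have "\<dots> \<le> 3 * tau C * (card R choose 2)" using arith_bound[OF k2 t1 False] .
    finally have cS: "card S \<le> 3 * tau C * (card R choose 2)" .
    have TS: "T r \<subseteq> usersOf A r \<inter> S" if "r \<in> R" for r using T that unfolding S_def by blast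
    have a: "card (usersOf A r \<inter> S) \<ge> min (card (usersOf A r)) (tau C)" if "r \<in> R" for r
      using card_mono[OF _ TS[OF that]] T finA by (metis finite_Int)
    have nS: "usersOf A r \<inter> S \<noteq> {}" if "r \<in> R" for r
    proof -
      have "card (usersOf A r) \<ge> 1" using ne[OF that] finA by (simp add: Suc_le_eq card_gt_0_iff)
      hence "card (T r) \<ge> 1" using T t1 by simp
      hence "T r \<noteq> {}" by auto
      thus ?thesis using TS[OF that] by blast
    qed
    have pair: "{r, r'} \<in> P2" if "r \<in> R" "r' \<in> R" "r \<noteq> r'" for r r'
      unfolding P2_def using that by auto
    have b: "usersOf A r \<inter> usersOf A r' \<inter> S \<noteq> {}"
      if "r \<in> R" "r' \<in> R" "usersOf A r \<inter> usersOf A r' \<noteq> {}" for r r'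
    proof (cases "r = r'")
      case True thus ?thesis using nS[OF that(1)] by simp
    next
      case False
      have ex: "\<exists>u. \<forall>x\<in>{r, r'}. u \<in> usersOf A x" using that(3) by blast
      define w where "w = (SOME u. \<forall>x\<in>{r, r'}. u \<in> usersOf A x)"
      have w: "\<forall>x\<in>{r, r'}. w \<in> usersOf A x" unfolding w_def using someI_ex[OF ex] .
      have "w \<in> I {r, r'}" unfolding I_def w_def using ex by simp
      hence "w \<in> S" unfolding S_def using pair[OF that(1,2) False] by blast
      thus ?thesis using w by blast
    qed
    have c: "usersOf A r \<inter> S \<noteq> usersOf A r' \<inter> S"
      if "r \<in> R" "r' \<in> R" "usersOf A r \<noteq> usersOf A r'" for r r'
    proof -
      have False': "r \<noteq> r'" using that(3) by blast
      have ex: "\<exists>u. \<exists>x\<in>{r, r'}. \<exists>y\<in>{r, r'}. u \<in> usersOf A x \<and> u \<notin> usersOf A y"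
        using that(3) by blast
      define w where "w = (SOME u. \<exists>x\<in>{r, r'}. \<exists>y\<in>{r, r'}. u \<in> usersOf A x \<and> u \<notin> usersOf A y)"
      have w: "\<exists>x\<in>{r, r'}. \<exists>y\<in>{r, r'}. w \<in> usersOf A x \<and> w \<notin> usersOf A y"
        unfolding w_def using someI_ex[OF ex] .
      have "w \<in> D {r, r'}" unfolding D_def w_def using ex by simp
      hence "w \<in> S" unfolding S_def using pair[OF that(1,2) False'] by blast
      thus ?thesis using w by blast
    qed
    show ?thesis using finS cS a b c by blast
  qed
qed

lemma reduce:
  assumes inst: "valued_apep R U C \<omega>"
    and AU: "A \<subseteq> U \<times> R" and comp: "complete R A"
    and k2: "card R \<ge> 2"
  shows "\<exists>S A'. finite S \<and> card S \<le> 3 * tau C * (card R choose 2) \<and> A' \<subseteq> A \<and> A' \<subseteq> S \<times> R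
     \<and> complete R A' \<and> wC C A' \<le> wC C A"
proof -
  obtain S where S: "finite S" "card S \<le> 3 * tau C * (card R choose 2)"
    "\<forall>r. r \<in> R \<longrightarrow> card (usersOf A r \<inter> S) \<ge> min (card (usersOf A r)) (tau C)"
    "\<forall>r r'. r \<in> R \<longrightarrow> r' \<in> R \<longrightarrow> usersOf A r \<inter> usersOf A r' \<noteq> {}
              \<longrightarrow> usersOf A r \<inter> usersOf A r' \<inter> S \<noteq> {}"
    "\<forall>r r'. r \<in> R \<longrightarrow> r' \<in> R \<longrightarrow> usersOf A r \<noteq> usersOf A r'
              \<longrightarrow> usersOf A r \<inter> S \<noteq> usersOf A r' \<inter> S"
    using construct[OF inst AU comp k2] by blast
  have K: "restr A S \<subseteq> A \<and> complete R (restr A S) \<and> wC C (restr A S) \<le> wC C A"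
    by (rule key[OF inst AU comp]) (use S(3-5) in blast)+
  have "restr A S \<subseteq> S \<times> R" using AU unfolding restr_def by auto
  thus ?thesis using K S(1,2) by blast
qed

theorem lemma4p6:
  fixes R :: "'r set" and U :: "'u set" and C :: "'r constr set" and \<omega> :: "'u \<Rightarrow> 'r set \<Rightarrow> nat"
  assumes inst: "valued_apep R U C \<omega>"
    and k2: "card R \<ge> 2"
  shows "wbounded R U C (3 * tau C * card R * (card R choose 2))
       \<and> (\<forall>A. A \<subseteq> U \<times> R \<longrightarrow> complete R A \<longrightarrow>
            (\<exists>A'. A' \<subseteq> A \<and> complete R A'
                 \<and> card {u. resOf A' u \<noteq> {}} \<le> 3 * tau C * (card R choose 2)
                 \<and> wC C A' \<le> wC C A))"
proof
  have finR: "finite R" using inst by (simp add: valued_apep_def)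
  show "wbounded R U C (3 * tau C * card R * (card R choose 2))"
    unfolding wbounded_def
  proof (intro allI impI)
    fix A assume AU: "A \<subseteq> U \<times> R" and comp: "complete R A"
      and big: "3 * tau C * card R * (card R choose 2) < card A"
    obtain S A' where S: "finite S" "card S \<le> 3 * tau C * (card R choose 2)" "A' \<subseteq> A"
      "A' \<subseteq> S \<times> R" "complete R A'" "wC C A' \<le> wC C A"
      using reduce[OF inst AU comp k2] by blast
    have "card A' \<le> card (S \<times> R)" using S(1,4) finR by (intro card_mono) auto
    also have "\<dots> = card S * card R" by (simp add: card_cartesian_product)
    also have "\<dots> \<le> 3 * tau C * (card R choose 2) * card R" using S(2) by (rule mult_right_mono) simp
    also have "\<dots> = 3 * tau C * card R * (card R choose 2)" by (simp add: ac_simps)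
    finally have "card A' < card A" using big by linarith
    thus "\<exists>A'. A' \<subseteq> A \<and> complete R A' \<and> card A' < card A \<and> wC C A' \<le> wC C A"
      using S by blast
  qed
next
  show "\<forall>A. A \<subseteq> U \<times> R \<longrightarrow> complete R A \<longrightarrow>
            (\<exists>A'. A' \<subseteq> A \<and> complete R A'
                 \<and> card {u. resOf A' u \<noteq> {}} \<le> 3 * tau C * (card R choose 2)
                 \<and> wC C A' \<le> wC C A)"
  proof (intro allI impI)
    fix A assume AU: "A \<subseteq> U \<times> R" and comp: "complete R A"
    obtain S A' where S: "finite S" "card S \<le> 3 * tau C * (card R choose 2)" "A' \<subseteq> A"
      "A' \<subseteq> S \<times> R" "complete R A'" "wC C A' \<le> wC C A"
      using reduce[OF inst AU comp k2] by blast
    have "{u. resOf A' u \<noteq> {}} \<subseteq> S" using S(4) unfolding resOf_def by blast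
    hence "card {u. resOf A' u \<noteq> {}} \<le> card S" using S(1) by (rule card_mono[rotated])
    thus "\<exists>A'. A' \<subseteq> A \<and> complete R A'
                 \<and> card {u. resOf A' u \<noteq> {}} \<le> 3 * tau C * (card R choose 2)
                 \<and> wC C A' \<le> wC C A" using S by (meson order_trans)
  qed
qed

end
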